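(* Let $\mathcal{D}=\mathrm{diag}(u_1,\dots,u_n)$ with all $u_j\neq0$, and let $\mathcal{N}=V_r^{-*}\mathcal{D}^*\mathcal{D}V_r^{-1}$. Then for all integers $\nu_1,\nu_2\ge0$, the pair $(P_\sharp,R_\sharp)$ minimizes $\|E_{\rm TG}^{\nu_1,\nu_2}(P,R)\|_{\mathcal N}$ over all $P,R\in\mathbb{C}^{n\times n_c}$ with $R^*AP$ invertible, i.e. $$(P_\sharp,R_\sharp)\in\operatorname*{argmin}_{P,R\in\mathbb{C}^{n\times n_c}}\|E_{\rm TG}^{\nu_1,\nu_2}(P,R)\|_{\mathcal N},$$ and the minimum value is $|1-\lambda_{n_c+1}|^{\nu_1+\nu_2}$ if $n_c<n$ and $0$ if $n_c=n$.
   Context: Let $A,M\in\mathbb{C}^{n\times n}$ be nonsingular with $M^{-1}A$ and $M^{-*}A^*$ diagonalizable. Let $V_r=[\bm v_{r,1},\dots,\bm v_{r,n}]$ and $V_l=[\bm v_{l,1},\dots,\bm v_{l,n}]$ be invertible matrices of right and left generalized eigenvectors of the pencil $(A,M)$, i.e. $AV_r=MV_r\Lambda$ and $V_l^*A=\Lambda V_l^*M$ with $\Lambda=\mathrm{diag}(\lambda_1,\dots,\lambda_n)$, chosen so that $V_l^*AV_r$ and $V_l^*MV_r$ are diagonal, and ordered so that $|1-\lambda_1|\ge\cdots\ge|1-\lambda_n|\ge0$. Fix $n_c\in\{1,\dots,n\}$. For $P,R\in\mathbb{C}^{n\times n_c}$ with $R^*AP$ invertible, $\Pi(P,R)=P(R^*AP)^{-1}R^*A$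 and $E_{\rm TG}^{\nu_1,\nu_2}(P,R)=(I-M^{-1}A)^{\nu_2}(I-\Pi(P,R))(I-M^{-1}A)^{\nu_1}$. $P_\sharp,R_\sharp\in\mathbb{C}^{n\times n_c}$ are any matrices with $\mathrm{range}(P_\sharp)=\mathrm{span}\{\bm v_{r,1},\dots,\bm v_{r,n_c}\}$, $\mathrm{range}(R_\sharp)=\mathrm{span}\{\bm v_{l,1},\dots,\bm v_{l,n_c}\}$. For Hermitian positive definite $\mathcal N$, $\|x\|_{\mathcal N}=(x^*\mathcal Nx)^{1/2}$ and $\|Z\|_{\mathcal N}=\max_{x\neq0}\|Zx\|_{\mathcal N}/\|x\|_{\mathcal N}$. *)

theory Defs
  imports "Jordan_Normal_Form.Schur_Decomposition"
begin

definition minv :: "complex mat \<Rightarrow> complex mat" where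
  "minv A = (THE B. B \<in> carrier_mat (dim_row A) (dim_row A) \<and>
              A * B = 1\<^sub>m (dim_row A) \<and> B * A = 1\<^sub>m (dim_row A))"

definition diagonalizable :: "complex mat \<Rightarrow> bool" where
  "diagonalizable X = (\<exists>D. diagonal_mat D \<and> similar_mat X D)"

definition col_range :: "complex mat \<Rightarrow> complex vec set" where
  "col_range P = {P *\<^sub>v x | x. x \<in> carrier_vec (dim_col P)}"

definition span_first_cols :: "complex mat \<Rightarrow> nat \<Rightarrow> complex vec set" where
  "span_first_cols V k = {V *\<^sub>v y | y. y \<in> carrier_vec (dim_col V) \<and>
                                   (\<forall>i. k \<le> i \<and> i < dim_col V \<longrightarrow> y $ i = 0)}"

definition vnormN :: "complex mat \<Rightarrow> complex vec \<Rightarrow> real" where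
  "vnormN N x = sqrt (Re (\<Sum>i<dim_vec x. cnj (x $ i) * (N *\<^sub>v x) $ i))"

(* induced operator norm; the max is attained, so Sup = max *)
definition mnormN :: "complex mat \<Rightarrow> complex mat \<Rightarrow> real" where
  "mnormN N Z = Sup {vnormN N (Z *\<^sub>v x) / vnormN N x | x.
                       x \<in> carrier_vec (dim_col Z) \<and> x \<noteq> 0\<^sub>v (dim_col Z)}"

definition PiPR :: "complex mat \<Rightarrow> complex mat \<Rightarrow> complex mat \<Rightarrow> complex mat" where
  "PiPR A P R = P * minv (mat_adjoint R * A * P) * mat_adjoint R * A"

definition E_TG :: "complex mat \<Rightarrow> complex mat \<Rightarrow> nat \<Rightarrow> nat \<Rightarrow> complex mat \<Rightarrow> complex mat \<Rightarrow> complex mat" where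
  "E_TG A M \<nu>1 \<nu>2 P R =
     (let n = dim_row A; S = 1\<^sub>m n - minv M * A in
      (S ^\<^sub>m \<nu>2) * (1\<^sub>m n - PiPR A P R) * (S ^\<^sub>m \<nu>1))"

end

theory Submission
  imports Defs
begin



lemma minv_prop:
  assumes A: "(A::complex mat) \<in> carrier_mat n n" and inv: "invertible_mat A"
  shows "minv A \<in> carrier_mat n n \<and> A * minv A = 1\<^sub>m n \<and> minv A * A = 1\<^sub>m n"
proof -
  from inv obtain B where AB: "A * B = 1\<^sub>m (dim_row A)" and BA: "B * A = 1\<^sub>m (dim_row B)"
    unfolding invertible_mat_def inverts_mat_def by auto
  have dA: "dim_row A = n" "dim_col A = n" using A by auto
  have "dim_col (B * A) = dim_col (1\<^sub>m (dim_row B) :: complex mat)" using BA by (rule arg_cong)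
  hence r: "dim_row B = n" using dA by simp
  have "dim_col (A * B) = dim_col (1\<^sub>m (dim_row A) :: complex mat)" using AB by (rule arg_cong)
  hence c: "dim_col B = n" using dA by simp
  have B: "B \<in> carrier_mat n n" using r c by (intro carrier_matI)
  have P: "B \<in> carrier_mat n n \<and> A * B = 1\<^sub>m n \<and> B * A = 1\<^sub>m n"
    using AB BA B dA r by simp
  have U: "C = B" if C: "C \<in> carrier_mat n n \<and> A * C = 1\<^sub>m n \<and> C * A = 1\<^sub>m n" for C
  proof -
    have C1: "C \<in> carrier_mat n n" using C by simp
    have "C = C * (A * B)" using C1 P by simp
    also have "\<dots> = (C * A) * B" by (rule assoc_mult_mat[OF C1 A B, symmetric])
    also have "\<dots> = B" using C B by simp
    finally show ?thesis .
  qed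
  have "minv A = B" unfolding minv_def dA(1)
    by (rule the_equality, rule P, rule U)
  thus ?thesis using P by simp
qed

lemma adj_dim[simp]: "dim_row (mat_adjoint A) = dim_col A" "dim_col (mat_adjoint A) = dim_row A"
  unfolding mat_adjoint_def by auto

lemma adj_carrier[simp]: "A \<in> carrier_mat m n \<Longrightarrow> mat_adjoint A \<in> carrier_mat n m"
proof -
  assume A: "A \<in> carrier_mat m n"
  show ?thesis using carrier_matD[OF A] by (intro carrier_matI) simp_all
qed

lemma adj_index[simp]: "i < dim_col A \<Longrightarrow> j < dim_row A \<Longrightarrow> mat_adjoint A $$ (i,j) = cnj (A $$ (j,i))"
  unfolding mat_adjoint_def by (simp add: mat_of_rows_index)

lemma adj_mult:
  assumes A: "(A::complex mat) \<in> carrier_mat m k" and B: "B \<in> carrier_mat k n"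
  shows "mat_adjoint (A * B) = mat_adjoint B * mat_adjoint A"
proof (rule eq_matI)
  fix i j assume i: "i < dim_row (mat_adjoint B * mat_adjoint A)" and j: "j < dim_col (mat_adjoint B * mat_adjoint A)"
  hence i: "i < n" and j: "j < m" using A B by auto
  have "mat_adjoint (A * B) $$ (i,j) = cnj ((A*B) $$ (j,i))" using A B i j by (subst adj_index, auto)
  also have "\<dots> = (\<Sum>l\<in>{0..<k}. cnj (A $$ (j,l)) * cnj (B $$ (l,i)))" using A B i j by (auto simp: scalar_prod_def)
  also have "\<dots> = (\<Sum>l\<in>{0..<k}. mat_adjoint B $$ (i,l) * mat_adjoint A $$ (l,j))"
    by (rule sum.cong[OF refl]) (use A B i j in \<open>simp add: mult.commute\<close>)
  also have "\<dots> = (mat_adjoint B * mat_adjoint A) $$ (i,j)" using A B i j by (simp add: scalar_prod_def)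
  finally show "mat_adjoint (A * B) $$ (i,j) = (mat_adjoint B * mat_adjoint A) $$ (i,j)" .
qed (use A B in auto)

lemma adj_one[simp]: "mat_adjoint (1\<^sub>m n :: complex mat) = 1\<^sub>m n"
  by (rule eq_matI, auto)

lemma entry_unit:
  assumes A: "(A::complex mat) \<in> carrier_mat m k" and j: "j < m" and i: "i < k"
  shows "(A *\<^sub>v unit_vec k i) $ j = A $$ (j,i)"
  using A j i by auto

lemma mat_eq_cols:
  assumes X: "(X::complex mat) \<in> carrier_mat n m" and Y: "Y \<in> carrier_mat n m"
    and eq: "\<And>j. j < m \<Longrightarrow> X *\<^sub>v unit_vec m j = Y *\<^sub>v unit_vec m j"
  shows "X = Y"
proof (rule eq_matI)
  fix i j assume i: "i < dim_row Y" and j: "j < dim_col Y"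
  have "X $$ (i,j) = (X *\<^sub>v unit_vec m j) $ i" using X Y i j by (subst entry_unit[OF X], auto)
  also have "\<dots> = (Y *\<^sub>v unit_vec m j) $ i" using eq j Y by auto
  also have "\<dots> = Y $$ (i,j)" using Y i j by (subst entry_unit[OF Y], auto)
  finally show "X $$ (i,j) = Y $$ (i,j)" .
qed (use X Y in auto)

lemma diag_mult_vec:
  assumes c: "(c::complex vec) \<in> carrier_vec n"
  shows "mat_diag n f *\<^sub>v c = vec n (\<lambda>i. f i * c $ i)"
proof (rule eq_vecI)
  fix i assume i: "i < dim_vec (vec n (\<lambda>i. f i * c $ i))"
  hence i: "i < n" by simp
  have "(mat_diag n f *\<^sub>v c) $ i = (\<Sum>j\<in>{0..<n}. (if i = j then f j else 0) * c $ j)"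
    using i c by (auto simp: mat_diag_def scalar_prod_def)
  also have "\<dots> = f i * c $ i"
    by (subst sum.remove[of _ i], insert i, auto)
  finally show "(mat_diag n f *\<^sub>v c) $ i = vec n (\<lambda>i. f i * c $ i) $ i" using i by simp
qed (auto simp: mat_diag_def)

lemma adj_sum:
  assumes R: "(R::complex mat) \<in> carrier_mat m k" and a: "a \<in> carrier_vec k" and w: "w \<in> carrier_vec m"
  shows "(\<Sum>i<k. cnj (a $ i) * (mat_adjoint R *\<^sub>v w) $ i) = (\<Sum>l<m. cnj ((R *\<^sub>v a) $ l) * w $ l)"
proof -
  have "(\<Sum>i<k. cnj (a $ i) * (mat_adjoint R *\<^sub>v w) $ i)
      = (\<Sum>i<k. cnj (a $ i) * (\<Sum>l<m. cnj (R $$ (l,i)) * w $ l))"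
    using R a w by (auto simp: scalar_prod_def atLeast0LessThan intro!: sum.cong)
  also have "\<dots> = (\<Sum>i<k. \<Sum>l<m. cnj (R $$ (l,i) * a $ i) * w $ l)"
    by (simp add: sum_distrib_left mult_ac)
  also have "\<dots> = (\<Sum>l<m. \<Sum>i<k. cnj (R $$ (l,i) * a $ i) * w $ l)"
    by (rule sum.swap)
  also have "\<dots> = (\<Sum>l<m. cnj ((R *\<^sub>v a) $ l) * w $ l)"
    using R a w by (auto simp: scalar_prod_def atLeast0LessThan sum_distrib_right intro!: sum.cong)
  finally show ?thesis .
qed

lemma quad:
  assumes B: "(B::complex mat) \<in> carrier_mat m n" and x: "x \<in> carrier_vec n"
  shows "Re (\<Sum>i<n. cnj (x $ i) * ((mat_adjoint B * B) *\<^sub>v x) $ i) = (\<Sum>l<m. cmod ((B *\<^sub>v x) $ l) ^ 2)"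
proof -
  have "(mat_adjoint B * B) *\<^sub>v x = mat_adjoint B *\<^sub>v (B *\<^sub>v x)"
    using B x by (metis adj_carrier assoc_mult_mat_vec)
  hence "(\<Sum>i<n. cnj (x $ i) * ((mat_adjoint B * B) *\<^sub>v x) $ i)
      = (\<Sum>l<m. cnj ((B *\<^sub>v x) $ l) * (B *\<^sub>v x) $ l)"
    using adj_sum[OF B x, of "B *\<^sub>v x"] B x by auto
  also have "\<dots> = (\<Sum>l<m. complex_of_real (cmod ((B *\<^sub>v x) $ l) ^ 2))"
    by (intro sum.cong refl, subst complex_norm_square, simp add: mult.commute)
  finally show ?thesis by simp
qed




definition wn :: "nat \<Rightarrow> (nat \<Rightarrow> complex) \<Rightarrow> complex vec \<Rightarrow> real" where
  "wn n u c = sqrt (\<Sum>i<n. (cmod (u i) * cmod (c $ i))^2)"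

lemma wn_nonneg: "0 \<le> wn n u c" unfolding wn_def by (simp add: sum_nonneg)

lemma wn_pos:
  assumes u: "\<forall>j<n. u j \<noteq> 0" and c: "c \<in> carrier_vec n" and nz: "c \<noteq> 0\<^sub>v n"
  shows "0 < wn n u c"
proof -
  have "\<exists>j<n. c $ j \<noteq> 0"
  proof (rule ccontr)
    assume "\<not> ?thesis"
    hence "c = 0\<^sub>v n" using c by (intro eq_vecI) auto
    with nz show False by simp
  qed
  then obtain j where j: "j < n" "c $ j \<noteq> 0" by blast
  have "0 < (cmod (u j) * cmod (c $ j))^2" using u j by auto
  also have "\<dots> \<le> (\<Sum>i<n. (cmod (u i) * cmod (c $ i))^2)"
    by (rule member_le_sum[of j "{..<n}" "\<lambda>i. (cmod (u i) * cmod (c $ i))^2"], insert j, auto)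
  finally show ?thesis unfolding wn_def by simp
qed

lemma wn_comp_le:
  assumes j: "j < n"
  shows "cmod (u j) * cmod (c $ j) \<le> wn n u c"
proof -
  have "(cmod (u j) * cmod (c $ j))^2 \<le> (\<Sum>i<n. (cmod (u i) * cmod (c $ i))^2)"
    by (rule member_le_sum[of j "{..<n}" "\<lambda>i. (cmod (u i) * cmod (c $ i))^2"], insert j, auto)
  thus ?thesis unfolding wn_def by (simp add: real_le_rsqrt)
qed

lemma wn_bound:
  assumes u: "\<forall>j<n. u j \<noteq> 0" and H: "(H::complex mat) \<in> carrier_mat n n"
  shows "\<exists>K. \<forall>c\<in>carrier_vec n. wn n u (H *\<^sub>v c) \<le> K * wn n u c"
proof -
  define h where "h i = (\<Sum>j<n. cmod (H $$ (i,j)) / cmod (u j))" for i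
  define K0 where "K0 = (\<Sum>i<n. (cmod (u i) * h i)^2)"
  have "\<forall>c\<in>carrier_vec n. wn n u (H *\<^sub>v c) \<le> sqrt K0 * wn n u c"
  proof
    fix c :: "complex vec" assume c: "c \<in> carrier_vec n"
    define Y where "Y = wn n u c"
    have Y0: "0 \<le> Y" unfolding Y_def by (rule wn_nonneg)
    have cj: "cmod (c $ j) \<le> Y / cmod (u j)" if j: "j < n" for j
      using wn_comp_le[OF j, of u c] u j unfolding Y_def by (simp add: field_simps mult.commute)
    have hi: "cmod ((H *\<^sub>v c) $ i) \<le> h i * Y" if i: "i < n" for i
    proof -
      have "(H *\<^sub>v c) $ i = (\<Sum>j<n. H $$ (i,j) * c $ j)"
        using H c i by (auto simp: scalar_prod_def atLeast0LessThan)
      hence "cmod ((H *\<^sub>v c) $ i) \<le> (\<Sum>j<n. cmod (H $$ (i,j)) * cmod (c $ j))"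
        by (metis (no_types, lifting) norm_mult norm_sum sum.cong)
      also have "\<dots> \<le> (\<Sum>j<n. cmod (H $$ (i,j)) * (Y / cmod (u j)))"
        by (rule sum_mono, rule mult_left_mono, auto intro: cj)
      also have "\<dots> = h i * Y" unfolding h_def by (simp add: sum_distrib_right)
      finally show ?thesis .
    qed
    have "(\<Sum>i<n. (cmod (u i) * cmod ((H *\<^sub>v c) $ i))^2) \<le> (\<Sum>i<n. (cmod (u i) * (h i * Y))^2)"
    proof (rule sum_mono)
      fix i assume "i \<in> {..<n}"
      hence i: "i < n" by simp
      show "(cmod (u i) * cmod ((H *\<^sub>v c) $ i))^2 \<le> (cmod (u i) * (h i * Y))^2"
        by (rule power_mono, rule mult_left_mono, rule hi[OF i], auto)
    qed
    also have "\<dots> = K0 * Y^2" unfolding K0_def by (simp add: sum_distrib_left sum_distrib_right power_mult_distrib mult_ac)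
    finally have "wn n u (H *\<^sub>v c) \<le> sqrt (K0 * Y^2)" unfolding wn_def by simp
    also have "\<dots> = sqrt K0 * Y" using Y0 by (simp add: real_sqrt_mult)
    finally show "wn n u (H *\<^sub>v c) \<le> sqrt K0 * wn n u c" unfolding Y_def .
  qed
  thus ?thesis by blast
qed




lemma mult_zero_vec_r[simp]: "(B::complex mat) \<in> carrier_mat m k \<Longrightarrow> B *\<^sub>v 0\<^sub>v k = 0\<^sub>v m"
  by (intro eq_vecI, auto simp: scalar_prod_def)

locale tg =
  fixes n nc :: nat and A M Vr Vl :: "complex mat" and lam u :: "nat \<Rightarrow> complex"
  assumes A: "A \<in> carrier_mat n n" and M: "M \<in> carrier_mat n n"
    and Ainv: "invertible_mat A" and Minv: "invertible_mat M"
    and Vr: "Vr \<in> carrier_mat n n" and Vl: "Vl \<in> carrier_mat n n"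
    and Vr_inv: "invertible_mat Vr" and Vl_inv: "invertible_mat Vl"
    and right_eig: "A * Vr = M * Vr * mat_diag n lam"
    and diagA: "diagonal_mat (mat_adjoint Vl * A * Vr)"
    and order: "\<forall>i j. i \<le> j \<and> j < n \<longrightarrow> cmod (1 - lam j) \<le> cmod (1 - lam i)"
    and nc: "1 \<le> nc" "nc \<le> n"
    and u: "\<forall>j<n. u j \<noteq> 0"
begin

abbreviation "Wi \<equiv> minv Vr"
abbreviation "Wl \<equiv> minv Vl"
abbreviation "S \<equiv> 1\<^sub>m n - minv M * A"
abbreviation "Nm \<equiv> mat_adjoint (minv Vr) * mat_adjoint (mat_diag n u) * mat_diag n u * minv Vr"
abbreviation "mu i \<equiv> 1 - lam i"

lemma Wi: "Wi \<in> carrier_mat n n" "Vr * Wi = 1\<^sub>m n" "Wi * Vr = 1\<^sub>m n"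
  using minv_prop[OF Vr Vr_inv] by auto
lemma Wl: "Wl \<in> carrier_mat n n" "Vl * Wl = 1\<^sub>m n" "Wl * Vl = 1\<^sub>m n"
  using minv_prop[OF Vl Vl_inv] by auto
lemma Mi: "minv M \<in> carrier_mat n n" "M * minv M = 1\<^sub>m n" "minv M * M = 1\<^sub>m n"
  using minv_prop[OF M Minv] by auto
lemma Ai: "minv A \<in> carrier_mat n n" "A * minv A = 1\<^sub>m n" "minv A * A = 1\<^sub>m n"
  using minv_prop[OF A Ainv] by auto

lemma S_carrier: "S \<in> carrier_mat n n" using Mi A by auto

lemma decomp:
  assumes x: "x \<in> carrier_vec n"
  shows "Vr *\<^sub>v (Wi *\<^sub>v x) = x" "Wi *\<^sub>v x \<in> carrier_vec n"
    "x \<noteq> 0\<^sub>v n \<Longrightarrow> Wi *\<^sub>v x \<noteq> 0\<^sub>v n"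
proof -
  have "Vr *\<^sub>v (Wi *\<^sub>v x) = (Vr * Wi) *\<^sub>v x" by (rule assoc_mult_mat_vec[OF Vr Wi(1) x, symmetric])
  also have "\<dots> = x" unfolding Wi(2) by (rule one_mult_mat_vec[OF x])
  finally show 1: "Vr *\<^sub>v (Wi *\<^sub>v x) = x" .
  show "Wi *\<^sub>v x \<in> carrier_vec n" by (rule mult_mat_vec_carrier[OF Wi(1) x])
  assume "x \<noteq> 0\<^sub>v n"
  thus "Wi *\<^sub>v x \<noteq> 0\<^sub>v n" using 1 mult_zero_vec_r[OF Vr] by auto
qed

lemma WiVr: "c \<in> carrier_vec n \<Longrightarrow> Wi *\<^sub>v (Vr *\<^sub>v c) = c"
proof -
  assume c: "c \<in> carrier_vec n"
  have "Wi *\<^sub>v (Vr *\<^sub>v c) = (Wi * Vr) *\<^sub>v c" by (rule assoc_mult_mat_vec[OF Wi(1) Vr c, symmetric])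
  also have "\<dots> = c" unfolding Wi(3) by (rule one_mult_mat_vec[OF c])
  finally show ?thesis .
qed

lemma vnorm_Vr:
  assumes c: "c \<in> carrier_vec n"
  shows "vnormN Nm (Vr *\<^sub>v c) = wn n u c"
proof -
  define B where "B = mat_diag n u * Wi"
  have B: "B \<in> carrier_mat n n" unfolding B_def using Wi(1) by (metis mat_diag_dim mult_carrier_mat)
  have adjB: "mat_adjoint B = mat_adjoint Wi * mat_adjoint (mat_diag n u)"
    unfolding B_def using Wi(1) by (intro adj_mult[of _ n n _ n], auto)
  have NB: "Nm = mat_adjoint B * B"
    unfolding adjB unfolding B_def
  proof (rule assoc_mult_mat[of _ n n _ n _ n])
    show "mat_adjoint Wi * mat_adjoint (mat_diag n u) \<in> carrier_mat n n"
      using Wi(1) by (metis adj_carrier mat_diag_dim mult_carrier_mat)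
  qed (use Wi(1) in auto)
  have x: "Vr *\<^sub>v c \<in> carrier_vec n" using Vr c by auto
  have Bx: "B *\<^sub>v (Vr *\<^sub>v c) = vec n (\<lambda>i. u i * c $ i)"
  proof -
    have "B *\<^sub>v (Vr *\<^sub>v c) = mat_diag n u *\<^sub>v (Wi *\<^sub>v (Vr *\<^sub>v c))"
      unfolding B_def using Wi x by (subst assoc_mult_mat_vec[of _ n n _ n], auto)
    also have "\<dots> = mat_diag n u *\<^sub>v c" using WiVr[OF c] by simp
    finally show ?thesis using diag_mult_vec[OF c] by simp
  qed
  have "vnormN Nm (Vr *\<^sub>v c) = sqrt (\<Sum>l<n. cmod ((B *\<^sub>v (Vr *\<^sub>v c)) $ l) ^ 2)"
  proof -
    have dx: "dim_vec (Vr *\<^sub>v c) = n" using Vr c by auto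
    show ?thesis by (simp only: vnormN_def NB dx quad[OF B x])
  qed
  also have "\<dots> = wn n u c" unfolding Bx wn_def
    by (intro arg_cong[where f=sqrt] sum.cong refl, simp add: norm_mult)
  finally show ?thesis .
qed

lemma S_eig1:
  assumes c: "c \<in> carrier_vec n"
  shows "S *\<^sub>v (Vr *\<^sub>v c) = Vr *\<^sub>v vec n (\<lambda>i. mu i * c $ i)"
proof -
  have x: "Vr *\<^sub>v c \<in> carrier_vec n" using Vr c by auto
  have dc: "mat_diag n lam *\<^sub>v c \<in> carrier_vec n" using c by (metis mat_diag_dim mult_mat_vec_carrier)
  have "(minv M * A) *\<^sub>v (Vr *\<^sub>v c) = minv M *\<^sub>v ((A * Vr) *\<^sub>v c)"
    using Mi A Vr c by (simp add: assoc_mult_mat_vec[of _ n n _ n])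
  also have "(A * Vr) *\<^sub>v c = M *\<^sub>v (Vr *\<^sub>v (mat_diag n lam *\<^sub>v c))"
  proof -
    have "(M * Vr * mat_diag n lam) *\<^sub>v c = (M * Vr) *\<^sub>v (mat_diag n lam *\<^sub>v c)"
      using M Vr c by (intro assoc_mult_mat_vec[of _ n n _ n]) auto
    also have "\<dots> = M *\<^sub>v (Vr *\<^sub>v (mat_diag n lam *\<^sub>v c))"
      using M Vr dc by (intro assoc_mult_mat_vec[of _ n n _ n]) auto
    finally show ?thesis unfolding right_eig .
  qed
  also have "minv M *\<^sub>v (M *\<^sub>v (Vr *\<^sub>v (mat_diag n lam *\<^sub>v c))) = Vr *\<^sub>v (mat_diag n lam *\<^sub>v c)"
  proof -
    have "minv M *\<^sub>v (M *\<^sub>v (Vr *\<^sub>v (mat_diag n lam *\<^sub>v c))) = (minv M * M) *\<^sub>v (Vr *\<^sub>v (mat_diag n lam *\<^sub>v c))"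
      using Mi M Vr dc by (intro assoc_mult_mat_vec[symmetric, of _ n n _ n]) auto
    also have "\<dots> = Vr *\<^sub>v (mat_diag n lam *\<^sub>v c)"
      unfolding Mi(3) by (rule one_mult_mat_vec[OF mult_mat_vec_carrier[OF Vr dc]])
    finally show ?thesis .
  qed
  finally have 1: "(minv M * A) *\<^sub>v (Vr *\<^sub>v c) = Vr *\<^sub>v vec n (\<lambda>i. lam i * c $ i)"
    unfolding diag_mult_vec[OF c] .
  have "S *\<^sub>v (Vr *\<^sub>v c) = Vr *\<^sub>v c - (minv M * A) *\<^sub>v (Vr *\<^sub>v c)"
    using Mi A x by (subst minus_mult_distrib_mat_vec[of _ n n], auto)
  also have "\<dots> = Vr *\<^sub>v c - Vr *\<^sub>v vec n (\<lambda>i. lam i * c $ i)" unfolding 1 ..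
  also have "\<dots> = Vr *\<^sub>v (c - vec n (\<lambda>i. lam i * c $ i))"
    using Vr c by (subst mult_minus_distrib_mat_vec[of _ n n], auto)
  also have "c - vec n (\<lambda>i. lam i * c $ i) = vec n (\<lambda>i. mu i * c $ i)"
    using c by (intro eq_vecI, auto simp: algebra_simps)
  finally show ?thesis .
qed

lemma S_rows: "dim_row S = n" using Mi(1) by simp

lemma S_pow:
  "c \<in> carrier_vec n \<Longrightarrow> S ^\<^sub>m k *\<^sub>v (Vr *\<^sub>v c) = Vr *\<^sub>v vec n (\<lambda>i. mu i ^ k * c $ i)"
proof (induction k arbitrary: c)
  case 0
  have "vec n (\<lambda>i. mu i ^ 0 * c $ i) = c" using 0 by (intro eq_vecI, auto)
  then show ?case using Vr 0 S_rows by simp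
next
  case (Suc k)
  note c = Suc.prems
  have Sk: "S ^\<^sub>m k \<in> carrier_mat n n" using pow_mat_dim_square[OF S_carrier] by (intro carrier_matI)
  have "S ^\<^sub>m Suc k *\<^sub>v (Vr *\<^sub>v c) = S ^\<^sub>m k *\<^sub>v (S *\<^sub>v (Vr *\<^sub>v c))"
    unfolding pow_mat.simps(2) by (rule assoc_mult_mat_vec[OF Sk S_carrier mult_mat_vec_carrier[OF Vr c]])
  also have "\<dots> = S ^\<^sub>m k *\<^sub>v (Vr *\<^sub>v vec n (\<lambda>i. mu i * c $ i))" unfolding S_eig1[OF c] ..
  also have "\<dots> = Vr *\<^sub>v vec n (\<lambda>i. mu i ^ k * (vec n (\<lambda>i. mu i * c $ i)) $ i)"
    by (rule Suc.IH, auto)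
  also have "vec n (\<lambda>i. mu i ^ k * (vec n (\<lambda>i. mu i * c $ i)) $ i) = vec n (\<lambda>i. mu i ^ Suc k * c $ i)"
    by (intro eq_vecI, auto)
  finally show ?case .
qed

end



context tg begin

lemma n_pos: "0 < n" using nc by auto

lemma vnorm_eq: "x \<in> carrier_vec n \<Longrightarrow> vnormN Nm x = wn n u (Wi *\<^sub>v x)"
proof -
  assume x: "x \<in> carrier_vec n"
  have "vnormN Nm (Vr *\<^sub>v (Wi *\<^sub>v x)) = wn n u (Wi *\<^sub>v x)" by (rule vnorm_Vr[OF decomp(2)[OF x]])
  thus ?thesis unfolding decomp(1)[OF x] .
qed

lemma vnorm_pos: "x \<in> carrier_vec n \<Longrightarrow> x \<noteq> 0\<^sub>v n \<Longrightarrow> 0 < vnormN Nm x"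
proof -
  assume x: "x \<in> carrier_vec n" and nz: "x \<noteq> 0\<^sub>v n"
  show ?thesis unfolding vnorm_eq[OF x] by (rule wn_pos[OF u decomp(2)[OF x] decomp(3)[OF x nz]])
qed

lemma vnorm_nonneg: "x \<in> carrier_vec n \<Longrightarrow> 0 \<le> vnormN Nm x" unfolding vnorm_eq by (rule wn_nonneg)

lemma bdd:
  assumes Z: "Z \<in> carrier_mat n n"
  shows "bdd_above {vnormN Nm (Z *\<^sub>v x) / vnormN Nm x | x. x \<in> carrier_vec n \<and> x \<noteq> 0\<^sub>v n}"
proof -
  have H: "Wi * Z * Vr \<in> carrier_mat n n" using mult_carrier_mat[OF mult_carrier_mat[OF Wi(1) Z] Vr] .
  obtain K where K: "\<forall>c\<in>carrier_vec n. wn n u ((Wi * Z * Vr) *\<^sub>v c) \<le> K * wn n u c"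
    using wn_bound[OF u H] by blast
  show ?thesis
  proof (rule bdd_aboveI[of _ K])
    fix r assume "r \<in> {vnormN Nm (Z *\<^sub>v x) / vnormN Nm x | x. x \<in> carrier_vec n \<and> x \<noteq> 0\<^sub>v n}"
    then obtain x where x: "x \<in> carrier_vec n" "x \<noteq> 0\<^sub>v n" and r: "r = vnormN Nm (Z *\<^sub>v x) / vnormN Nm x" by blast
    define c where "c = Wi *\<^sub>v x"
    have c: "c \<in> carrier_vec n" "Vr *\<^sub>v c = x" using decomp[OF x(1)] unfolding c_def by auto
    have Zx: "Z *\<^sub>v x \<in> carrier_vec n" using mult_mat_vec_carrier[OF Z x(1)] .
    have "(Wi * Z * Vr) *\<^sub>v c = (Wi * Z) *\<^sub>v (Vr *\<^sub>v c)"
      by (rule assoc_mult_mat_vec[OF mult_carrier_mat[OF Wi(1) Z] Vr c(1)])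
    also have "\<dots> = Wi *\<^sub>v (Z *\<^sub>v x)" unfolding c(2)
      by (rule assoc_mult_mat_vec[OF Wi(1) Z x(1)])
    finally have eq: "(Wi * Z * Vr) *\<^sub>v c = Wi *\<^sub>v (Z *\<^sub>v x)" .
    have "vnormN Nm (Z *\<^sub>v x) = wn n u ((Wi * Z * Vr) *\<^sub>v c)"
      unfolding eq by (rule vnorm_eq[OF Zx])
    also have "\<dots> \<le> K * wn n u c" using K c(1) by blast
    also have "wn n u c = vnormN Nm x" unfolding c_def by (rule vnorm_eq[OF x(1), symmetric])
    finally have le: "vnormN Nm (Z *\<^sub>v x) \<le> K * vnormN Nm x" .
    have pos: "0 < vnormN Nm x" by (rule vnorm_pos[OF x])
    show "r \<le> K" unfolding r using le pos by (simp add: divide_le_eq)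
  qed
qed

lemma mnorm_ge:
  assumes Z: "Z \<in> carrier_mat n n" and x: "x \<in> carrier_vec n" "x \<noteq> 0\<^sub>v n"
    and b: "b \<le> vnormN Nm (Z *\<^sub>v x) / vnormN Nm x"
  shows "b \<le> mnormN Nm Z"
proof -
  have dZ: "dim_col Z = n" using Z by auto
  have mem: "vnormN Nm (Z *\<^sub>v x) / vnormN Nm x \<in> {vnormN Nm (Z *\<^sub>v x) / vnormN Nm x | x. x \<in> carrier_vec n \<and> x \<noteq> 0\<^sub>v n}"
    using x by blast
  have "vnormN Nm (Z *\<^sub>v x) / vnormN Nm x \<le> mnormN Nm Z"
    unfolding mnormN_def dZ by (rule cSup_upper[OF mem bdd[OF Z]])
  with b show ?thesis by simp
qed

lemma mnorm_le:
  assumes Z: "Z \<in> carrier_mat n n"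
    and b: "\<And>x. x \<in> carrier_vec n \<Longrightarrow> x \<noteq> 0\<^sub>v n \<Longrightarrow> vnormN Nm (Z *\<^sub>v x) / vnormN Nm x \<le> b"
  shows "mnormN Nm Z \<le> b"
proof -
  have dZ: "dim_col Z = n" using Z by auto
  show ?thesis unfolding mnormN_def dZ
  proof (rule cSup_least)
    have "unit_vec n 0 \<in> carrier_vec n" "unit_vec n 0 \<noteq> 0\<^sub>v n" using n_pos by auto
    thus "{vnormN Nm (Z *\<^sub>v x) / vnormN Nm x | x. x \<in> carrier_vec n \<and> x \<noteq> 0\<^sub>v n} \<noteq> {}"
      by blast
  next
    fix r assume "r \<in> {vnormN Nm (Z *\<^sub>v x) / vnormN Nm x | x. x \<in> carrier_vec n \<and> x \<noteq> 0\<^sub>v n}"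
    then obtain x where "x \<in> carrier_vec n" "x \<noteq> 0\<^sub>v n" "r = vnormN Nm (Z *\<^sub>v x) / vnormN Nm x" by blast
    thus "r \<le> b" using b by simp
  qed
qed

lemma mnorm_nonneg:
  assumes Z: "Z \<in> carrier_mat n n"
  shows "0 \<le> mnormN Nm Z"
proof (rule mnorm_ge[OF Z])
  show "unit_vec n 0 \<in> carrier_vec n" "unit_vec n 0 \<noteq> 0\<^sub>v n" using n_pos by auto
next
  have "0 \<le> vnormN Nm (Z *\<^sub>v unit_vec n 0)" using Z by (intro vnorm_nonneg) auto
  moreover have "0 \<le> vnormN Nm (unit_vec n 0)" by (intro vnorm_nonneg) auto
  ultimately show "0 \<le> vnormN Nm (Z *\<^sub>v unit_vec n 0) / vnormN Nm (unit_vec n 0)" by simp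
qed

lemma Pi_gen:
  assumes P: "P \<in> carrier_mat n nc" and R: "R \<in> carrier_mat n nc"
    and inv: "invertible_mat (mat_adjoint R * A * P)"
  shows "PiPR A P R \<in> carrier_mat n n"
    "w \<in> carrier_vec n \<Longrightarrow> PiPR A P R *\<^sub>v w =
       P *\<^sub>v (minv (mat_adjoint R * A * P) *\<^sub>v (mat_adjoint R *\<^sub>v (A *\<^sub>v w)))"
proof -
  have aR: "mat_adjoint R \<in> carrier_mat nc n" using R by simp
  have X: "mat_adjoint R * A * P \<in> carrier_mat nc nc" using mult_carrier_mat[OF mult_carrier_mat[OF aR A] P] .
  note K = minv_prop[OF X inv]
  have K1: "minv (mat_adjoint R * A * P) \<in> carrier_mat nc nc" using K by simp
  have PK: "P * minv (mat_adjoint R * A * P) \<in> carrier_mat n nc" using mult_carrier_mat[OF P K1] .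
  show "PiPR A P R \<in> carrier_mat n n" unfolding PiPR_def using mult_carrier_mat[OF mult_carrier_mat[OF PK aR] A] .
  assume w: "w \<in> carrier_vec n"
  have "PiPR A P R *\<^sub>v w = (P * minv (mat_adjoint R * A * P) * mat_adjoint R) *\<^sub>v (A *\<^sub>v w)"
    unfolding PiPR_def using PK aR A w by (subst assoc_mult_mat_vec[of _ n n _ n], auto)
  also have "\<dots> = (P * minv (mat_adjoint R * A * P)) *\<^sub>v (mat_adjoint R *\<^sub>v (A *\<^sub>v w))"
    using PK aR A w by (subst assoc_mult_mat_vec[of _ n nc _ n], auto)
  also have "\<dots> = P *\<^sub>v (minv (mat_adjoint R * A * P) *\<^sub>v (mat_adjoint R *\<^sub>v (A *\<^sub>v w)))"
    using P K1 aR A w by (subst assoc_mult_mat_vec[of _ n nc _ nc], auto)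
  finally show "PiPR A P R *\<^sub>v w =
       P *\<^sub>v (minv (mat_adjoint R * A * P) *\<^sub>v (mat_adjoint R *\<^sub>v (A *\<^sub>v w)))" .
qed

lemma Spow_carrier: "S ^\<^sub>m k \<in> carrier_mat n n"
  using S_carrier by (metis pow_mat_dim_square carrier_matI)

lemma E_gen:
  assumes Pi: "PiPR A P R \<in> carrier_mat n n"
  shows "E_TG A M \<nu>1 \<nu>2 P R \<in> carrier_mat n n"
    "x \<in> carrier_vec n \<Longrightarrow> E_TG A M \<nu>1 \<nu>2 P R *\<^sub>v x =
       S ^\<^sub>m \<nu>2 *\<^sub>v (S ^\<^sub>m \<nu>1 *\<^sub>v x - PiPR A P R *\<^sub>v (S ^\<^sub>m \<nu>1 *\<^sub>v x))"
proof -
  have dA: "dim_row A = n" using A by auto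
  have E: "E_TG A M \<nu>1 \<nu>2 P R = S ^\<^sub>m \<nu>2 * (1\<^sub>m n - PiPR A P R) * S ^\<^sub>m \<nu>1"
    unfolding E_TG_def Let_def dA ..
  have IP: "1\<^sub>m n - PiPR A P R \<in> carrier_mat n n" using Pi by auto
  show "E_TG A M \<nu>1 \<nu>2 P R \<in> carrier_mat n n" unfolding E by (rule mult_carrier_mat[OF mult_carrier_mat[OF Spow_carrier IP] Spow_carrier])
  assume x: "x \<in> carrier_vec n"
  have y: "S ^\<^sub>m \<nu>1 *\<^sub>v x \<in> carrier_vec n" by (rule mult_mat_vec_carrier[OF Spow_carrier x])
  have "E_TG A M \<nu>1 \<nu>2 P R *\<^sub>v x = (S ^\<^sub>m \<nu>2 * (1\<^sub>m n - PiPR A P R)) *\<^sub>v (S ^\<^sub>m \<nu>1 *\<^sub>v x)"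
    unfolding E by (rule assoc_mult_mat_vec[OF mult_carrier_mat[OF Spow_carrier IP] Spow_carrier x])
  also have "\<dots> = S ^\<^sub>m \<nu>2 *\<^sub>v ((1\<^sub>m n - PiPR A P R) *\<^sub>v (S ^\<^sub>m \<nu>1 *\<^sub>v x))"
    by (rule assoc_mult_mat_vec[OF Spow_carrier IP y])
  also have "(1\<^sub>m n - PiPR A P R) *\<^sub>v (S ^\<^sub>m \<nu>1 *\<^sub>v x) = S ^\<^sub>m \<nu>1 *\<^sub>v x - PiPR A P R *\<^sub>v (S ^\<^sub>m \<nu>1 *\<^sub>v x)"
    using Pi y by (subst minus_mult_distrib_mat_vec[of _ n n], auto)
  finally show "E_TG A M \<nu>1 \<nu>2 P R *\<^sub>v x =
       S ^\<^sub>m \<nu>2 *\<^sub>v (S ^\<^sub>m \<nu>1 *\<^sub>v x - PiPR A P R *\<^sub>v (S ^\<^sub>m \<nu>1 *\<^sub>v x))" .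
qed

end



lemma kernel_exists:
  assumes Y: "(Y::complex mat) \<in> carrier_mat k n" and kn: "k < n"
  shows "\<exists>c \<in> carrier_vec n. c \<noteq> 0\<^sub>v n \<and> Y *\<^sub>v c = 0\<^sub>v k \<and> (\<forall>i. k < i \<and> i < n \<longrightarrow> c $ i = 0)"
proof -
  define X where "X = mat (Suc k) (Suc k) (\<lambda>(i,j). if i < k then Y $$ (i,j) else 0)"
  have X: "X \<in> carrier_mat (Suc k) (Suc k)" unfolding X_def by auto
  have "det X = 0"
  proof -
    have "signof p * (\<Prod>i = 0..<Suc k. X $$ (i, p i)) = 0" if p: "p permutes {0..<Suc k}" for p
    proof -
      have "p k < Suc k" using permutes_in_image[OF p, of k] by auto
      hence "X $$ (k, p k) = 0" unfolding X_def by auto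
      hence "\<exists>i\<in>{0..<Suc k}. X $$ (i, p i) = 0" by auto
      hence "(\<Prod>i = 0..<Suc k. X $$ (i, p i)) = 0" by (intro prod_zero) auto
      thus ?thesis by simp
    qed
    thus ?thesis unfolding det_def'[OF X] by (intro sum.neutral) auto
  qed
  then obtain v where v: "v \<in> carrier_vec (Suc k)" "v \<noteq> 0\<^sub>v (Suc k)" "X *\<^sub>v v = 0\<^sub>v (Suc k)"
    using det_0_iff_vec_prod_zero[OF X] by blast
  define c where "c = vec n (\<lambda>i. if i \<le> k then v $ i else 0)"
  have c: "c \<in> carrier_vec n" unfolding c_def by auto
  have "c \<noteq> 0\<^sub>v n"
  proof
    assume c0: "c = 0\<^sub>v n"
    have "v = 0\<^sub>v (Suc k)"
    proof (rule eq_vecI)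
      fix i assume "i < dim_vec (0\<^sub>v (Suc k))"
      hence i: "i < Suc k" by simp
      have "c $ i = v $ i" unfolding c_def using i kn by auto
      thus "v $ i = 0\<^sub>v (Suc k) $ i" using c0 i kn by auto
    qed (use v in auto)
    with v show False by simp
  qed
  moreover have "Y *\<^sub>v c = 0\<^sub>v k"
  proof (rule eq_vecI)
    fix i assume "i < dim_vec (0\<^sub>v k)"
    hence i: "i < k" by simp
    have "(Y *\<^sub>v c) $ i = (\<Sum>j\<in>{0..<n}. Y $$ (i,j) * c $ j)"
      using Y c i by (auto simp: scalar_prod_def)
    also have "\<dots> = (\<Sum>j\<in>{0..<Suc k}. X $$ (i,j) * v $ j)"
      by (rule sum.mono_neutral_cong_right, insert kn i, auto simp: c_def X_def)
    also have "\<dots> = (X *\<^sub>v v) $ i" using X v(1) i by (auto simp: scalar_prod_def)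
    also have "\<dots> = 0\<^sub>v (Suc k) $ i" by (simp only: v(3))
    also have "\<dots> = 0" using i by simp
    finally show "(Y *\<^sub>v c) $ i = 0\<^sub>v k $ i" using i by simp
  qed (use Y in auto)
  moreover have "\<forall>i. k < i \<and> i < n \<longrightarrow> c $ i = 0" unfolding c_def by auto
  ultimately show ?thesis using c by blast
qed




context tg begin

lemma term_ineq:
  fixes b a m :: real
  assumes "0 \<le> b" "b \<le> m"
  shows "b^2 * a^2 \<le> a^2 * m^2"
proof -
  have "b^2 \<le> m^2" using assms by (intro power_mono) auto
  from mult_left_mono[OF this, of "a^2"] show ?thesis by (simp add: mult.commute)
qed

lemma LB:
  assumes P: "P \<in> carrier_mat n nc" and R: "R \<in> carrier_mat n nc"
    and inv: "invertible_mat (mat_adjoint R * A * P)"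
  shows "(if nc < n then cmod (mu nc) ^ (\<nu>1 + \<nu>2) else 0) \<le> mnormN Nm (E_TG A M \<nu>1 \<nu>2 P R)"
proof -
  note Pi = Pi_gen[OF P R inv]
  note E = E_gen[OF Pi(1)]
  define b where "b = (if nc < n then cmod (mu nc) ^ (\<nu>1 + \<nu>2) else 0)"
  have triv: "0 \<le> mnormN Nm (E_TG A M \<nu>1 \<nu>2 P R)" by (rule mnorm_nonneg[OF E(1)])
  have "b \<le> mnormN Nm (E_TG A M \<nu>1 \<nu>2 P R)"
  proof (cases "nc < n \<and> (\<forall>i\<le>nc. mu i ^ \<nu>1 \<noteq> 0)")
    case False
    have "b = 0"
    proof (cases "nc < n")
      case True
      with False obtain i where i: "i \<le> nc" "mu i ^ \<nu>1 = 0" by auto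
      hence mi: "mu i = 0" and nu: "\<nu>1 \<noteq> 0" by auto
      have "cmod (mu nc) \<le> cmod (mu i)" by (rule order[rule_format]) (use i True in auto)
      also have "cmod (mu i) = 0" using mi by simp
      finally have "mu nc = 0" by simp
      thus ?thesis unfolding b_def using True nu by simp
    qed (simp add: b_def)
    thus ?thesis using triv by simp
  next
    case True
    hence ncn: "nc < n" and nz: "\<forall>i\<le>nc. mu i ^ \<nu>1 \<noteq> 0" by auto
    have bdef: "b = cmod (mu nc) ^ (\<nu>1 + \<nu>2)" unfolding b_def using ncn by simp
    have aR: "mat_adjoint R \<in> carrier_mat nc n" using R by simp
    have aRA: "mat_adjoint R * A \<in> carrier_mat nc n" by (rule mult_carrier_mat[OF aR A])
    define Y where "Y = mat_adjoint R * A * Vr"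
    have Y: "Y \<in> carrier_mat nc n" unfolding Y_def by (rule mult_carrier_mat[OF aRA Vr])
    obtain c where c: "c \<in> carrier_vec n" "c \<noteq> 0\<^sub>v n" "Y *\<^sub>v c = 0\<^sub>v nc"
        "\<forall>i. nc < i \<and> i < n \<longrightarrow> c $ i = 0"
      using kernel_exists[OF Y ncn] by blast
    define cc where "cc = vec n (\<lambda>i. c $ i / mu i ^ \<nu>1)"
    have cc: "cc \<in> carrier_vec n" unfolding cc_def by simp
    have ccc: "vec n (\<lambda>i. mu i ^ \<nu>1 * cc $ i) = c"
    proof (rule eq_vecI)
      fix i assume "i < dim_vec c"
      hence i: "i < n" using c(1) by simp
      show "vec n (\<lambda>i. mu i ^ \<nu>1 * cc $ i) $ i = c $ i"
      proof (cases "i \<le> nc")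
        case True
        thus ?thesis using nz i unfolding cc_def by simp
      next
        case False
        thus ?thesis using c(4) i unfolding cc_def by simp
      qed
    qed (use c(1) in simp)
    have cci: "c $ i = mu i ^ \<nu>1 * cc $ i" if i: "i < n" for i
      using arg_cong[OF ccc, of "\<lambda>v. v $ i"] i by simp
    have cc0: "cc $ i = 0" if "nc < i" "i < n" for i
      using c(4) that unfolding cc_def by simp
    have ccnz: "cc \<noteq> 0\<^sub>v n"
    proof
      assume "cc = 0\<^sub>v n"
      hence "c = 0\<^sub>v n" using ccc[symmetric] by (intro eq_vecI) auto
      with c(2) show False by simp
    qed
    define x where "x = Vr *\<^sub>v cc"
    have x: "x \<in> carrier_vec n" unfolding x_def by (rule mult_mat_vec_carrier[OF Vr cc])
    have xnz: "x \<noteq> 0\<^sub>v n"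
    proof
      assume "x = 0\<^sub>v n"
      hence "Wi *\<^sub>v x = 0\<^sub>v n" using mult_zero_vec_r[OF Wi(1)] by simp
      with WiVr[OF cc] ccnz show False unfolding x_def by simp
    qed
    have s1: "S ^\<^sub>m \<nu>1 *\<^sub>v x = Vr *\<^sub>v c" unfolding x_def S_pow[OF cc] ccc ..
    have Vc: "Vr *\<^sub>v c \<in> carrier_vec n" by (rule mult_mat_vec_carrier[OF Vr c(1)])
    have "mat_adjoint R *\<^sub>v (A *\<^sub>v (Vr *\<^sub>v c)) = Y *\<^sub>v c"
    proof -
      have "Y *\<^sub>v c = (mat_adjoint R * A) *\<^sub>v (Vr *\<^sub>v c)"
        unfolding Y_def by (rule assoc_mult_mat_vec[OF aRA Vr c(1)])
      also have "\<dots> = mat_adjoint R *\<^sub>v (A *\<^sub>v (Vr *\<^sub>v c))"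
        by (rule assoc_mult_mat_vec[OF aR A Vc])
      finally show ?thesis by simp
    qed
    hence Pz: "PiPR A P R *\<^sub>v (Vr *\<^sub>v c) = 0\<^sub>v n"
    proof -
      assume h: "mat_adjoint R *\<^sub>v (A *\<^sub>v (Vr *\<^sub>v c)) = Y *\<^sub>v c"
      have K: "minv (mat_adjoint R * A * P) \<in> carrier_mat nc nc"
        using minv_prop[OF mult_carrier_mat[OF aRA P] inv] by simp
      show ?thesis unfolding Pi(2)[OF Vc] h c(3) mult_zero_vec_r[OF K] mult_zero_vec_r[OF P] ..
    qed
    have Ex: "E_TG A M \<nu>1 \<nu>2 P R *\<^sub>v x = Vr *\<^sub>v vec n (\<lambda>i. mu i ^ \<nu>2 * c $ i)"
      unfolding E(2)[OF x] s1 Pz using Vc S_pow[OF c(1)] by simp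
    have nEx: "vnormN Nm (E_TG A M \<nu>1 \<nu>2 P R *\<^sub>v x) = wn n u (vec n (\<lambda>i. mu i ^ \<nu>2 * c $ i))"
      unfolding Ex by (rule vnorm_Vr, simp)
    have nx: "vnormN Nm x = wn n u cc" unfolding x_def by (rule vnorm_Vr[OF cc])
    have b0: "0 \<le> b" unfolding bdef by simp
    have sumle: "b^2 * (\<Sum>i<n. (cmod (u i) * cmod (cc $ i))^2)
        \<le> (\<Sum>i<n. (cmod (u i) * cmod (vec n (\<lambda>i. mu i ^ \<nu>2 * c $ i) $ i))^2)"
      unfolding sum_distrib_left
    proof (rule sum_mono)
      fix i assume "i \<in> {..<n}"
      hence i: "i < n" by simp
      have eqt: "(cmod (u i) * cmod (vec n (\<lambda>i. mu i ^ \<nu>2 * c $ i) $ i))^2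
          = (cmod (u i) * cmod (cc $ i))^2 * (cmod (mu i) ^ (\<nu>1 + \<nu>2))^2"
        using i cci[OF i] by (simp add: norm_mult norm_power power_add power_mult_distrib mult_ac)
      show "b^2 * (cmod (u i) * cmod (cc $ i))^2
          \<le> (cmod (u i) * cmod (vec n (\<lambda>i. mu i ^ \<nu>2 * c $ i) $ i))^2"
      proof (cases "i \<le> nc")
        case True
        have "cmod (mu nc) \<le> cmod (mu i)" by (rule order[rule_format]) (use True ncn in auto)
        hence "b \<le> cmod (mu i) ^ (\<nu>1 + \<nu>2)" unfolding bdef by (intro power_mono) auto
        thus ?thesis unfolding eqt by (rule term_ineq[OF b0])
      next
        case False
        thus ?thesis unfolding eqt using cc0[of i] i by simp
      qed
    qed
    have "b * wn n u cc = sqrt (b^2 * (\<Sum>i<n. (cmod (u i) * cmod (cc $ i))^2))"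
      unfolding wn_def using b0 by (simp add: real_sqrt_mult)
    also have "\<dots> \<le> wn n u (vec n (\<lambda>i. mu i ^ \<nu>2 * c $ i))"
      unfolding wn_def using sumle by (rule real_sqrt_le_mono)
    finally have "b * vnormN Nm x \<le> vnormN Nm (E_TG A M \<nu>1 \<nu>2 P R *\<^sub>v x)"
      unfolding nEx nx .
    hence "b \<le> vnormN Nm (E_TG A M \<nu>1 \<nu>2 P R *\<^sub>v x) / vnormN Nm x"
      using vnorm_pos[OF x xnz] by (simp add: le_divide_eq)
    thus ?thesis by (rule mnorm_ge[OF E(1) x xnz])
  qed
  thus ?thesis unfolding b_def .
qed

end



lemma unit_sum:
  assumes j: "j < k"
  shows "(\<Sum>i<k. cnj (unit_vec k j $ i) * f i) = (f j :: complex)"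
proof -
  have "(\<Sum>i<k. cnj (unit_vec k j $ i) * f i) = (\<Sum>i<k. if i = j then f i else 0)"
    by (rule sum.cong[OF refl]) (auto simp: unit_vec_def)
  also have "\<dots> = f j" using j by (simp add: sum.delta)
  finally show ?thesis .
qed

lemma adjv:
  assumes R: "(R::complex mat) \<in> carrier_mat m k" and j: "j < k" and w: "w \<in> carrier_vec m"
  shows "(mat_adjoint R *\<^sub>v w) $ j = (\<Sum>l<m. cnj ((R *\<^sub>v unit_vec k j) $ l) * w $ l)"
proof -
  have "(mat_adjoint R *\<^sub>v w) $ j = (\<Sum>i<k. cnj (unit_vec k j $ i) * (mat_adjoint R *\<^sub>v w) $ i)"
    by (rule unit_sum[OF j, symmetric])
  also have "\<dots> = (\<Sum>l<m. cnj ((R *\<^sub>v unit_vec k j) $ l) * w $ l)"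
    by (rule adj_sum[OF R unit_vec_carrier w])
  finally show ?thesis .
qed

lemma colmat_unit:
  assumes f: "\<And>i. i < k \<Longrightarrow> f i \<in> carrier_vec m" and i: "i < k"
  shows "mat m k (\<lambda>(r,s). f s $ r) *\<^sub>v unit_vec k i = (f i :: complex vec)"
proof (rule eq_vecI)
  fix r assume "r < dim_vec (f i)"
  hence r: "r < m" using f[OF i] by simp
  have "(mat m k (\<lambda>(r,s). f s $ r) *\<^sub>v unit_vec k i) $ r = mat m k (\<lambda>(r,s). f s $ r) $$ (r,i)"
    by (rule entry_unit[OF _ r i], simp)
  thus "(mat m k (\<lambda>(r,s). f s $ r) *\<^sub>v unit_vec k i) $ r = f i $ r" using r i by simp
qed (use f[OF i] in simp)

lemma range_in:
  assumes rng: "col_range P = span_first_cols V nc" and V: "V \<in> carrier_mat n n"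
    and P: "P \<in> carrier_mat n nc" and i: "i < nc"
  shows "\<exists>z\<in>carrier_vec nc. P *\<^sub>v z = V *\<^sub>v unit_vec n i"
proof -
  have "V *\<^sub>v unit_vec n i \<in> span_first_cols V nc"
    unfolding span_first_cols_def using V i by (intro CollectI exI[of _ "unit_vec n i"]) auto
  hence "V *\<^sub>v unit_vec n i \<in> col_range P" using rng by simp
  then obtain z where "V *\<^sub>v unit_vec n i = P *\<^sub>v z" "z \<in> carrier_vec (dim_col P)"
    unfolding col_range_def by blast
  thus ?thesis using P by auto
qed

lemma range_out:
  assumes rng: "col_range P = span_first_cols V nc" and V: "V \<in> carrier_mat n n"
    and P: "P \<in> carrier_mat n nc" and j: "j < nc"
  shows "\<exists>y\<in>carrier_vec n. P *\<^sub>v unit_vec nc j = V *\<^sub>v y \<and> (\<forall>i. nc \<le> i \<and> i < n \<longrightarrow> y $ i = 0)"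
proof -
  have "P *\<^sub>v unit_vec nc j \<in> col_range P"
    unfolding col_range_def using P by (intro CollectI exI[of _ "unit_vec nc j"]) auto
  hence "P *\<^sub>v unit_vec nc j \<in> span_first_cols V nc" using rng by simp
  then obtain y where "P *\<^sub>v unit_vec nc j = V *\<^sub>v y" "y \<in> carrier_vec (dim_col V)"
      "\<forall>i. nc \<le> i \<and> i < dim_col V \<longrightarrow> y $ i = 0"
    unfolding span_first_cols_def by blast
  thus ?thesis using V by auto
qed

context tg begin

abbreviation "Dl \<equiv> mat_adjoint Vl * A * Vr"

lemma Dl_carrier: "Dl \<in> carrier_mat n n"
  using mult_carrier_mat[OF mult_carrier_mat[OF adj_carrier[OF Vl] A] Vr] .

lemma Dl_vec: "c \<in> carrier_vec n \<Longrightarrow> Dl *\<^sub>v c = mat_adjoint Vl *\<^sub>v (A *\<^sub>v (Vr *\<^sub>v c))"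
proof -
  assume c: "c \<in> carrier_vec n"
  have "Dl *\<^sub>v c = (mat_adjoint Vl * A) *\<^sub>v (Vr *\<^sub>v c)"
    by (rule assoc_mult_mat_vec[OF mult_carrier_mat[OF adj_carrier[OF Vl] A] Vr c])
  also have "\<dots> = mat_adjoint Vl *\<^sub>v (A *\<^sub>v (Vr *\<^sub>v c))"
    by (rule assoc_mult_mat_vec[OF adj_carrier[OF Vl] A mult_mat_vec_carrier[OF Vr c]])
  finally show ?thesis .
qed

lemma Dl_off: "k < n \<Longrightarrow> i < n \<Longrightarrow> k \<noteq> i \<Longrightarrow> Dl $$ (k,i) = 0"
proof -
  assume ki: "k < n" "i < n" "k \<noteq> i"
  have dr: "dim_row Dl = n" "dim_col Dl = n" using Dl_carrier by auto
  show ?thesis using diagA ki unfolding diagonal_mat_def dr by blast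
qed

lemma Dl_entry: "k < n \<Longrightarrow> i < n \<Longrightarrow> (Dl *\<^sub>v unit_vec n i) $ k = (if k = i then Dl $$ (i,i) else 0)"
  using entry_unit[OF Dl_carrier] Dl_off by auto

lemma Dl_nz: "i < n \<Longrightarrow> Dl $$ (i,i) \<noteq> 0"
proof
  assume i: "i < n" and z: "Dl $$ (i,i) = 0"
  have e: "unit_vec n i \<in> carrier_vec n" by simp
  have "Dl *\<^sub>v unit_vec n i = 0\<^sub>v n"
    using Dl_entry[OF _ i] z Dl_carrier by (intro eq_vecI) auto
  hence h: "mat_adjoint Vl *\<^sub>v (A *\<^sub>v (Vr *\<^sub>v unit_vec n i)) = 0\<^sub>v n" using Dl_vec[OF e] by simp
  have y: "A *\<^sub>v (Vr *\<^sub>v unit_vec n i) \<in> carrier_vec n" using A Vr by simp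
  have adjWV: "mat_adjoint Wl * mat_adjoint Vl = 1\<^sub>m n"
    using adj_mult[OF Vl Wl(1)] Wl(2) by simp
  have "A *\<^sub>v (Vr *\<^sub>v unit_vec n i) = (mat_adjoint Wl * mat_adjoint Vl) *\<^sub>v (A *\<^sub>v (Vr *\<^sub>v unit_vec n i))"
    unfolding adjWV using y by simp
  also have "\<dots> = mat_adjoint Wl *\<^sub>v (mat_adjoint Vl *\<^sub>v (A *\<^sub>v (Vr *\<^sub>v unit_vec n i)))"
    by (rule assoc_mult_mat_vec[OF adj_carrier[OF Wl(1)] adj_carrier[OF Vl] y])
  also have "\<dots> = 0\<^sub>v n" unfolding h by (rule mult_zero_vec_r[OF adj_carrier[OF Wl(1)]])
  finally have h2: "A *\<^sub>v (Vr *\<^sub>v unit_vec n i) = 0\<^sub>v n" .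
  have v: "Vr *\<^sub>v unit_vec n i \<in> carrier_vec n" using Vr by simp
  have "Vr *\<^sub>v unit_vec n i = (minv A * A) *\<^sub>v (Vr *\<^sub>v unit_vec n i)" unfolding Ai(3) using v by simp
  also have "\<dots> = minv A *\<^sub>v (A *\<^sub>v (Vr *\<^sub>v unit_vec n i))" by (rule assoc_mult_mat_vec[OF Ai(1) A v])
  also have "\<dots> = 0\<^sub>v n" unfolding h2 by (rule mult_zero_vec_r[OF Ai(1)])
  finally have "Vr *\<^sub>v unit_vec n i = 0\<^sub>v n" .
  hence "unit_vec n i = Wi *\<^sub>v 0\<^sub>v n" using WiVr[OF e] by metis
  also have "\<dots> = 0\<^sub>v n" by (rule mult_zero_vec_r[OF Wi(1)])
  finally show False using i by simp
qed

end



lemma mat_diag_cong: "(\<And>i. i < k \<Longrightarrow> f i = g i) \<Longrightarrow> mat_diag k f = mat_diag k g"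
  unfolding mat_diag_def by (intro eq_matI) auto

context tg begin

lemma adjR_kill:
  assumes Rsh: "Rsh \<in> carrier_mat n nc" and Rr: "col_range Rsh = span_first_cols Vl nc"
    and i: "i < n" "nc \<le> i"
  shows "mat_adjoint Rsh *\<^sub>v (A *\<^sub>v (Vr *\<^sub>v unit_vec n i)) = 0\<^sub>v nc"
proof (rule eq_vecI)
  define w where "w = A *\<^sub>v (Vr *\<^sub>v unit_vec n i)"
  have w: "w \<in> carrier_vec n" unfolding w_def using A Vr by simp
  fix j assume "j < dim_vec (0\<^sub>v nc :: complex vec)"
  hence j: "j < nc" by simp
  obtain y where y: "y \<in> carrier_vec n" "Rsh *\<^sub>v unit_vec nc j = Vl *\<^sub>v y" "\<forall>k. nc \<le> k \<and> k < n \<longrightarrow> y $ k = 0"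
    using range_out[OF Rr Vl Rsh j] by blast
  have "(mat_adjoint Rsh *\<^sub>v w) $ j = (\<Sum>l<n. cnj ((Rsh *\<^sub>v unit_vec nc j) $ l) * w $ l)"
    by (rule adjv[OF Rsh j w])
  also have "\<dots> = (\<Sum>l<n. cnj ((Vl *\<^sub>v y) $ l) * w $ l)" unfolding y(2) ..
  also have "\<dots> = (\<Sum>k<n. cnj (y $ k) * (mat_adjoint Vl *\<^sub>v w) $ k)"
    by (rule adj_sum[OF Vl y(1) w, symmetric])
  also have "\<dots> = (\<Sum>k<n. cnj (y $ k) * (Dl *\<^sub>v unit_vec n i) $ k)"
    unfolding w_def Dl_vec[OF unit_vec_carrier] ..
  also have "\<dots> = 0"
  proof (rule sum.neutral, rule ballI)
    fix k assume "k \<in> {..<n}"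
    hence k: "k < n" by simp
    show "cnj (y $ k) * (Dl *\<^sub>v unit_vec n i) $ k = 0"
      unfolding Dl_entry[OF k i(1)] using y(3) i k by auto
  qed
  finally show "(mat_adjoint Rsh *\<^sub>v (A *\<^sub>v (Vr *\<^sub>v unit_vec n i))) $ j = 0\<^sub>v nc $ j"
    using j unfolding w_def by simp
qed (use Rsh in simp)

lemma inv_sharp:
  assumes Psh: "Psh \<in> carrier_mat n nc" and Rsh: "Rsh \<in> carrier_mat n nc"
    and Pr: "col_range Psh = span_first_cols Vr nc"
    and Rr: "col_range Rsh = span_first_cols Vl nc"
  shows "invertible_mat (mat_adjoint Rsh * A * Psh)"
proof -
  define X where "X = mat_adjoint Rsh * A * Psh"
  have aR: "mat_adjoint Rsh \<in> carrier_mat nc n" using Rsh by simp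
  have aRA: "mat_adjoint Rsh * A \<in> carrier_mat nc n" by (rule mult_carrier_mat[OF aR A])
  have X: "X \<in> carrier_mat nc nc" unfolding X_def by (rule mult_carrier_mat[OF aRA Psh])
  define zf where "zf i = (SOME z. z \<in> carrier_vec nc \<and> Psh *\<^sub>v z = Vr *\<^sub>v unit_vec n i)" for i
  have zf: "zf i \<in> carrier_vec nc \<and> Psh *\<^sub>v zf i = Vr *\<^sub>v unit_vec n i" if i: "i < nc" for i
    unfolding zf_def by (rule someI_ex, insert range_in[OF Pr Vr Psh i], blast)
  define wf where "wf i = (SOME z. z \<in> carrier_vec nc \<and> Rsh *\<^sub>v z = Vl *\<^sub>v unit_vec n i)" for i
  have wf: "wf i \<in> carrier_vec nc \<and> Rsh *\<^sub>v wf i = Vl *\<^sub>v unit_vec n i" if i: "i < nc" for i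
    unfolding wf_def by (rule someI_ex, insert range_in[OF Rr Vl Rsh i], blast)
  define Z where "Z = mat nc nc (\<lambda>(r,s). zf s $ r)"
  define Wm where "Wm = mat nc nc (\<lambda>(r,s). wf s $ r)"
  have Z: "Z \<in> carrier_mat nc nc" unfolding Z_def by simp
  have Wm: "Wm \<in> carrier_mat nc nc" unfolding Wm_def by simp
  have Zu: "Z *\<^sub>v unit_vec nc i = zf i" if "i < nc" for i
    unfolding Z_def by (rule colmat_unit, insert zf that, auto)
  have Wu: "Wm *\<^sub>v unit_vec nc i = wf i" if "i < nc" for i
    unfolding Wm_def by (rule colmat_unit, insert wf that, auto)
  have Xz: "X *\<^sub>v zf i = mat_adjoint Rsh *\<^sub>v (A *\<^sub>v (Vr *\<^sub>v unit_vec n i))" if i: "i < nc" for i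
  proof -
    have z: "zf i \<in> carrier_vec nc" using zf[OF i] by simp
    have "X *\<^sub>v zf i = (mat_adjoint Rsh * A) *\<^sub>v (Psh *\<^sub>v zf i)"
      unfolding X_def by (rule assoc_mult_mat_vec[OF aRA Psh z])
    also have "\<dots> = mat_adjoint Rsh *\<^sub>v (A *\<^sub>v (Psh *\<^sub>v zf i))"
      by (rule assoc_mult_mat_vec[OF aR A mult_mat_vec_carrier[OF Psh z]])
    finally show ?thesis using zf[OF i] by simp
  qed
  define G where "G = mat_adjoint Wm * X * Z"
  have aW: "mat_adjoint Wm \<in> carrier_mat nc nc" using Wm by simp
  have G: "G \<in> carrier_mat nc nc" unfolding G_def by (rule mult_carrier_mat[OF mult_carrier_mat[OF aW X] Z])
  have Gd: "G = mat_diag nc (\<lambda>i. Dl $$ (i,i))"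
  proof (rule eq_matI)
    fix j i assume "j < dim_row (mat_diag nc (\<lambda>i. Dl $$ (i,i)))" "i < dim_col (mat_diag nc (\<lambda>i. Dl $$ (i,i)))"
    hence j: "j < nc" and i: "i < nc" by (auto simp: mat_diag_def)
    have w: "A *\<^sub>v (Vr *\<^sub>v unit_vec n i) \<in> carrier_vec n" using A Vr by simp
    have "G $$ (j,i) = (G *\<^sub>v unit_vec nc i) $ j" by (rule entry_unit[OF G j i, symmetric])
    also have "G *\<^sub>v unit_vec nc i = mat_adjoint Wm *\<^sub>v (X *\<^sub>v (Z *\<^sub>v unit_vec nc i))"
    proof -
      have "G *\<^sub>v unit_vec nc i = (mat_adjoint Wm * X) *\<^sub>v (Z *\<^sub>v unit_vec nc i)"
        unfolding G_def by (rule assoc_mult_mat_vec[OF mult_carrier_mat[OF aW X] Z unit_vec_carrier])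
      also have "\<dots> = mat_adjoint Wm *\<^sub>v (X *\<^sub>v (Z *\<^sub>v unit_vec nc i))"
        by (rule assoc_mult_mat_vec[OF aW X mult_mat_vec_carrier[OF Z unit_vec_carrier]])
      finally show ?thesis .
    qed
    also have "\<dots> = mat_adjoint Wm *\<^sub>v (mat_adjoint Rsh *\<^sub>v (A *\<^sub>v (Vr *\<^sub>v unit_vec n i)))"
      unfolding Zu[OF i] Xz[OF i] ..
    also have "\<dots> $ j = (\<Sum>l<nc. cnj ((Wm *\<^sub>v unit_vec nc j) $ l) * (mat_adjoint Rsh *\<^sub>v (A *\<^sub>v (Vr *\<^sub>v unit_vec n i))) $ l)"
      by (rule adjv[OF Wm j], insert aR w, auto)
    also have "\<dots> = (\<Sum>l<nc. cnj (wf j $ l) * (mat_adjoint Rsh *\<^sub>v (A *\<^sub>v (Vr *\<^sub>v unit_vec n i))) $ l)"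
      unfolding Wu[OF j] ..
    also have "\<dots> = (\<Sum>l<n. cnj ((Rsh *\<^sub>v wf j) $ l) * (A *\<^sub>v (Vr *\<^sub>v unit_vec n i)) $ l)"
      by (rule adj_sum[OF Rsh _ w], insert wf[OF j], simp)
    also have "\<dots> = (\<Sum>l<n. cnj ((Vl *\<^sub>v unit_vec n j) $ l) * (A *\<^sub>v (Vr *\<^sub>v unit_vec n i)) $ l)"
      using wf[OF j] by simp
    also have "\<dots> = (mat_adjoint Vl *\<^sub>v (A *\<^sub>v (Vr *\<^sub>v unit_vec n i))) $ j"
      by (rule adjv[OF Vl _ w, symmetric], insert j nc, simp)
    also have "\<dots> = (Dl *\<^sub>v unit_vec n i) $ j" unfolding Dl_vec[OF unit_vec_carrier] ..
    also have "\<dots> = (if j = i then Dl $$ (i,i) else 0)" by (rule Dl_entry, insert i j nc, auto)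
    also have "\<dots> = mat_diag nc (\<lambda>i. Dl $$ (i,i)) $$ (j,i)" using i j by (simp add: mat_diag_def)
    finally show "G $$ (j,i) = mat_diag nc (\<lambda>i. Dl $$ (i,i)) $$ (j,i)" .
  qed (use G in \<open>auto simp: mat_diag_def\<close>)
  define Dd where "Dd = mat_diag nc (\<lambda>i. 1 / Dl $$ (i,i))"
  have Dd: "Dd \<in> carrier_mat nc nc" unfolding Dd_def by simp
  define L where "L = Dd * mat_adjoint Wm"
  have L: "L \<in> carrier_mat nc nc" unfolding L_def by (rule mult_carrier_mat[OF Dd aW])
  have "L * X * Z = Dd * G"
  proof -
    have "L * X = Dd * (mat_adjoint Wm * X)" unfolding L_def by (rule assoc_mult_mat[OF Dd aW X])
    hence "L * X * Z = Dd * (mat_adjoint Wm * X) * Z" by simp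
    also have "\<dots> = Dd * G" unfolding G_def by (rule assoc_mult_mat[OF Dd mult_carrier_mat[OF aW X] Z])
    finally show ?thesis .
  qed
  also have "\<dots> = mat_diag nc (\<lambda>i. 1 / Dl $$ (i,i) * Dl $$ (i,i))" unfolding Dd_def Gd by simp
  also have "\<dots> = mat_diag nc (\<lambda>i. 1)" by (rule mat_diag_cong, insert Dl_nz nc, auto)
  also have "\<dots> = 1\<^sub>m nc" by simp
  finally have LXZ: "L * X * Z = 1\<^sub>m nc" .
  have LX: "L * X \<in> carrier_mat nc nc" by (rule mult_carrier_mat[OF L X])
  have "Z * (L * X) = 1\<^sub>m nc" by (rule mat_mult_left_right_inverse[OF LX Z LXZ])
  hence ZLX: "Z * L * X = 1\<^sub>m nc" using assoc_mult_mat[OF Z L X] by simp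
  have ZL: "Z * L \<in> carrier_mat nc nc" by (rule mult_carrier_mat[OF Z L])
  have XZL: "X * (Z * L) = 1\<^sub>m nc" by (rule mat_mult_left_right_inverse[OF ZL X ZLX])
  have "invertible_mat X"
    unfolding invertible_mat_def inverts_mat_def square_mat.simps
    using X ZL XZL ZLX by (intro conjI exI[of _ "Z * L"]) auto
  thus ?thesis unfolding X_def .
qed

end



context tg begin

lemma sharp_UB:
  assumes Psh: "Psh \<in> carrier_mat n nc" and Rsh: "Rsh \<in> carrier_mat n nc"
    and Pr: "col_range Psh = span_first_cols Vr nc"
    and Rr: "col_range Rsh = span_first_cols Vl nc"
  shows "mnormN Nm (E_TG A M \<nu>1 \<nu>2 Psh Rsh) \<le> (if nc < n then cmod (mu nc) ^ (\<nu>1 + \<nu>2) else 0)"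
proof -
  have inv: "invertible_mat (mat_adjoint Rsh * A * Psh)" by (rule inv_sharp[OF Psh Rsh Pr Rr])
  note Pi = Pi_gen[OF Psh Rsh inv]
  note E = E_gen[OF Pi(1)]
  define b where "b = (if nc < n then cmod (mu nc) ^ (\<nu>1 + \<nu>2) else 0)"
  have b0: "0 \<le> b" unfolding b_def by simp
  have aR: "mat_adjoint Rsh \<in> carrier_mat nc n" using Rsh by simp
  have aRA: "mat_adjoint Rsh * A \<in> carrier_mat nc n" by (rule mult_carrier_mat[OF aR A])
  have X: "mat_adjoint Rsh * A * Psh \<in> carrier_mat nc nc" by (rule mult_carrier_mat[OF aRA Psh])
  note K = minv_prop[OF X inv]
  have K1: "minv (mat_adjoint Rsh * A * Psh) \<in> carrier_mat nc nc" using K by simp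
  define J where "J i = (if i < nc then 1 else 0 :: complex)" for i
  have Pin: "PiPR A Psh Rsh *\<^sub>v (Vr *\<^sub>v unit_vec n i) = Vr *\<^sub>v unit_vec n i" if i: "i < nc" for i
  proof -
    obtain z where z: "z \<in> carrier_vec nc" "Psh *\<^sub>v z = Vr *\<^sub>v unit_vec n i"
      using range_in[OF Pr Vr Psh i] by blast
    have "mat_adjoint Rsh *\<^sub>v (A *\<^sub>v (Psh *\<^sub>v z)) = (mat_adjoint Rsh * A * Psh) *\<^sub>v z"
    proof -
      have "(mat_adjoint Rsh * A * Psh) *\<^sub>v z = (mat_adjoint Rsh * A) *\<^sub>v (Psh *\<^sub>v z)"
        by (rule assoc_mult_mat_vec[OF aRA Psh z(1)])
      also have "\<dots> = mat_adjoint Rsh *\<^sub>v (A *\<^sub>v (Psh *\<^sub>v z))"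
        by (rule assoc_mult_mat_vec[OF aR A mult_mat_vec_carrier[OF Psh z(1)]])
      finally show ?thesis by simp
    qed
    moreover have "minv (mat_adjoint Rsh * A * Psh) *\<^sub>v ((mat_adjoint Rsh * A * Psh) *\<^sub>v z) = z"
    proof -
      have "minv (mat_adjoint Rsh * A * Psh) *\<^sub>v ((mat_adjoint Rsh * A * Psh) *\<^sub>v z)
          = (minv (mat_adjoint Rsh * A * Psh) * (mat_adjoint Rsh * A * Psh)) *\<^sub>v z"
        by (rule assoc_mult_mat_vec[OF K1 X z(1), symmetric])
      also have "\<dots> = z" using K z(1) by simp
      finally show ?thesis .
    qed
    ultimately show ?thesis
      unfolding z(2)[symmetric] Pi(2)[OF mult_mat_vec_carrier[OF Psh z(1)]] by simp
  qed
  have Pout: "PiPR A Psh Rsh *\<^sub>v (Vr *\<^sub>v unit_vec n i) = 0\<^sub>v n" if i: "i < n" "nc \<le> i" for i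
    unfolding Pi(2)[OF mult_mat_vec_carrier[OF Vr unit_vec_carrier]] adjR_kill[OF Rsh Rr i]
      mult_zero_vec_r[OF K1] mult_zero_vec_r[OF Psh] ..
  have PiM: "PiPR A Psh Rsh * Vr = Vr * mat_diag n J"
  proof (rule mat_eq_cols[OF mult_carrier_mat[OF Pi(1) Vr] mult_carrier_mat[OF Vr mat_diag_dim]])
    fix j assume j: "j < n"
    have "(PiPR A Psh Rsh * Vr) *\<^sub>v unit_vec n j = PiPR A Psh Rsh *\<^sub>v (Vr *\<^sub>v unit_vec n j)"
      by (rule assoc_mult_mat_vec[OF Pi(1) Vr unit_vec_carrier])
    moreover have "(Vr * mat_diag n J) *\<^sub>v unit_vec n j = Vr *\<^sub>v (mat_diag n J *\<^sub>v unit_vec n j)"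
      by (rule assoc_mult_mat_vec[OF Vr mat_diag_dim unit_vec_carrier])
    moreover have "mat_diag n J *\<^sub>v unit_vec n j = (if j < nc then unit_vec n j else 0\<^sub>v n)"
      unfolding diag_mult_vec[OF unit_vec_carrier] J_def using j by (intro eq_vecI) auto
    ultimately show "(PiPR A Psh Rsh * Vr) *\<^sub>v unit_vec n j = (Vr * mat_diag n J) *\<^sub>v unit_vec n j"
      using Pin Pout j mult_zero_vec_r[OF Vr] by (cases "j < nc") auto
  qed
  have Piv: "PiPR A Psh Rsh *\<^sub>v (Vr *\<^sub>v c) = Vr *\<^sub>v vec n (\<lambda>i. J i * c $ i)" if c: "c \<in> carrier_vec n" for c
  proof -
    have "PiPR A Psh Rsh *\<^sub>v (Vr *\<^sub>v c) = (PiPR A Psh Rsh * Vr) *\<^sub>v c"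
      by (rule assoc_mult_mat_vec[OF Pi(1) Vr c, symmetric])
    also have "\<dots> = Vr *\<^sub>v (mat_diag n J *\<^sub>v c)" unfolding PiM
      by (rule assoc_mult_mat_vec[OF Vr mat_diag_dim c])
    finally show ?thesis unfolding diag_mult_vec[OF c] .
  qed
  define g where "g i = (if i < nc then 0 else mu i ^ (\<nu>1 + \<nu>2))" for i
  have Ev: "E_TG A M \<nu>1 \<nu>2 Psh Rsh *\<^sub>v (Vr *\<^sub>v c) = Vr *\<^sub>v vec n (\<lambda>i. g i * c $ i)"
    if c: "c \<in> carrier_vec n" for c
  proof -
    define c1 where "c1 = vec n (\<lambda>i. mu i ^ \<nu>1 * c $ i)"
    have c1: "c1 \<in> carrier_vec n" unfolding c1_def by simp
    define c2 where "c2 = vec n (\<lambda>i. J i * c1 $ i)"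
    have c2: "c2 \<in> carrier_vec n" unfolding c2_def by simp
    have "E_TG A M \<nu>1 \<nu>2 Psh Rsh *\<^sub>v (Vr *\<^sub>v c) = S ^\<^sub>m \<nu>2 *\<^sub>v (Vr *\<^sub>v c1 - Vr *\<^sub>v c2)"
      unfolding E(2)[OF mult_mat_vec_carrier[OF Vr c]] S_pow[OF c] c1_def[symmetric] Piv[OF c1] c2_def[symmetric] ..
    also have "Vr *\<^sub>v c1 - Vr *\<^sub>v c2 = Vr *\<^sub>v (c1 - c2)"
      by (rule mult_minus_distrib_mat_vec[OF Vr c1 c2, symmetric])
    also have "S ^\<^sub>m \<nu>2 *\<^sub>v (Vr *\<^sub>v (c1 - c2)) = Vr *\<^sub>v vec n (\<lambda>i. mu i ^ \<nu>2 * (c1 - c2) $ i)"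
      by (rule S_pow, insert c1 c2, simp)
    also have "vec n (\<lambda>i. mu i ^ \<nu>2 * (c1 - c2) $ i) = vec n (\<lambda>i. g i * c $ i)"
      using c1 c2 unfolding c1_def c2_def g_def J_def by (intro eq_vecI) (auto simp: power_add)
    finally show ?thesis .
  qed
  have gb: "cmod (g i) \<le> b" if i: "i < n" for i
  proof (cases "i < nc")
    case True thus ?thesis unfolding g_def using b0 by simp
  next
    case False
    hence ncn: "nc < n" using i by simp
    have "cmod (mu i) \<le> cmod (mu nc)" by (rule order[rule_format]) (use False i in auto)
    hence "cmod (mu i) ^ (\<nu>1 + \<nu>2) \<le> cmod (mu nc) ^ (\<nu>1 + \<nu>2)" by (intro power_mono) auto
    thus ?thesis unfolding g_def b_def using False ncn by (simp add: norm_power)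
  qed
  have "mnormN Nm (E_TG A M \<nu>1 \<nu>2 Psh Rsh) \<le> b"
  proof (rule mnorm_le[OF E(1)])
    fix x :: "complex vec" assume x: "x \<in> carrier_vec n" and xnz: "x \<noteq> 0\<^sub>v n"
    define c where "c = Wi *\<^sub>v x"
    have c: "c \<in> carrier_vec n" "Vr *\<^sub>v c = x" using decomp[OF x] unfolding c_def by auto
    have nEx: "vnormN Nm (E_TG A M \<nu>1 \<nu>2 Psh Rsh *\<^sub>v x) = wn n u (vec n (\<lambda>i. g i * c $ i))"
      unfolding c(2)[symmetric] Ev[OF c(1)] by (rule vnorm_Vr, simp)
    have nx: "vnormN Nm x = wn n u c" unfolding c(2)[symmetric] by (rule vnorm_Vr[OF c(1)])
    have sumle: "(\<Sum>i<n. (cmod (u i) * cmod (vec n (\<lambda>i. g i * c $ i) $ i))^2)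
        \<le> b^2 * (\<Sum>i<n. (cmod (u i) * cmod (c $ i))^2)"
      unfolding sum_distrib_left
    proof (rule sum_mono)
      fix i assume "i \<in> {..<n}"
      hence i: "i < n" by simp
      have eqt: "(cmod (u i) * cmod (vec n (\<lambda>i. g i * c $ i) $ i))^2
          = (cmod (u i) * cmod (c $ i))^2 * (cmod (g i))^2"
        using i by (simp add: norm_mult power_mult_distrib mult_ac)
      have "(cmod (g i))^2 \<le> b^2" using gb[OF i] by (intro power_mono) auto
      from mult_left_mono[OF this, of "(cmod (u i) * cmod (c $ i))^2"]
      show "(cmod (u i) * cmod (vec n (\<lambda>i. g i * c $ i) $ i))^2 \<le> b^2 * (cmod (u i) * cmod (c $ i))^2"
        unfolding eqt by (simp add: mult.commute)
    qed
    have "wn n u (vec n (\<lambda>i. g i * c $ i)) \<le> sqrt (b^2 * (\<Sum>i<n. (cmod (u i) * cmod (c $ i))^2))"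
      unfolding wn_def using sumle by (rule real_sqrt_le_mono)
    also have "\<dots> = b * wn n u c" unfolding wn_def using b0 by (simp add: real_sqrt_mult)
    finally have "vnormN Nm (E_TG A M \<nu>1 \<nu>2 Psh Rsh *\<^sub>v x) \<le> b * vnormN Nm x" unfolding nEx nx .
    thus "vnormN Nm (E_TG A M \<nu>1 \<nu>2 Psh Rsh *\<^sub>v x) / vnormN Nm x \<le> b"
      using vnorm_pos[OF x xnz] by (simp add: divide_le_eq)
  qed
  thus ?thesis unfolding b_def .
qed

end


theorem theorem3p5:
  fixes n nc :: nat and A M Vr Vl Psh Rsh :: "complex mat"
    and lam u :: "nat \<Rightarrow> complex" and \<nu>1 \<nu>2 :: nat
  assumes A: "A \<in> carrier_mat n n" and M: "M \<in> carrier_mat n n"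
    and Ainv: "invertible_mat A" and Minv: "invertible_mat M"
    and diag1: "diagonalizable (minv M * A)"
    and diag2: "diagonalizable (minv (mat_adjoint M) * mat_adjoint A)"
    and Vr: "Vr \<in> carrier_mat n n" and Vl: "Vl \<in> carrier_mat n n"
    and Vr_inv: "invertible_mat Vr" and Vl_inv: "invertible_mat Vl"
    and right_eig: "A * Vr = M * Vr * mat_diag n lam"
    and left_eig: "mat_adjoint Vl * A = mat_diag n lam * mat_adjoint Vl * M"
    and diagA: "diagonal_mat (mat_adjoint Vl * A * Vr)"
    and diagM: "diagonal_mat (mat_adjoint Vl * M * Vr)"
    and order: "\<forall>i j. i \<le> j \<and> j < n \<longrightarrow> cmod (1 - lam j) \<le> cmod (1 - lam i)"
    and nc: "1 \<le> nc" "nc \<le> n"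
    and Psh: "Psh \<in> carrier_mat n nc" and Rsh: "Rsh \<in> carrier_mat n nc"
    and Psh_range: "col_range Psh = span_first_cols Vr nc"
    and Rsh_range: "col_range Rsh = span_first_cols Vl nc"
    and u: "\<forall>j<n. u j \<noteq> 0"
  shows "let D = mat_diag n u;
             N = mat_adjoint (minv Vr) * mat_adjoint D * D * minv Vr
         in invertible_mat (mat_adjoint Rsh * A * Psh)
            \<and> (\<forall>P \<in> carrier_mat n nc. \<forall>R \<in> carrier_mat n nc.
                  invertible_mat (mat_adjoint R * A * P) \<longrightarrow>
                  mnormN N (E_TG A M \<nu>1 \<nu>2 Psh Rsh) \<le> mnormN N (E_TG A M \<nu>1 \<nu>2 P R))
            \<and> mnormN N (E_TG A M \<nu>1 \<nu>2 Psh Rsh) =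
                (if nc < n then cmod (1 - lam nc) ^ (\<nu>1 + \<nu>2) else 0)"
proof -
  interpret tg n nc A M Vr Vl lam u
    by (rule tg.intro; fact)
  have inv: "invertible_mat (mat_adjoint Rsh * A * Psh)"
    by (rule inv_sharp[OF Psh Rsh Psh_range Rsh_range])
  have ub: "mnormN Nm (E_TG A M \<nu>1 \<nu>2 Psh Rsh) \<le> (if nc < n then cmod (1 - lam nc) ^ (\<nu>1 + \<nu>2) else 0)"
    by (rule sharp_UB[OF Psh Rsh Psh_range Rsh_range])
  have lb: "(if nc < n then cmod (1 - lam nc) ^ (\<nu>1 + \<nu>2) else 0) \<le> mnormN Nm (E_TG A M \<nu>1 \<nu>2 Psh Rsh)"
    by (rule LB[OF Psh Rsh inv])
  have eq: "mnormN Nm (E_TG A M \<nu>1 \<nu>2 Psh Rsh) = (if nc < n then cmod (1 - lam nc) ^ (\<nu>1 + \<nu>2) else 0)"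
    using ub lb by (rule antisym)
  have opt: "\<forall>P \<in> carrier_mat n nc. \<forall>R \<in> carrier_mat n nc.
                  invertible_mat (mat_adjoint R * A * P) \<longrightarrow>
                  mnormN Nm (E_TG A M \<nu>1 \<nu>2 Psh Rsh) \<le> mnormN Nm (E_TG A M \<nu>1 \<nu>2 P R)"
  proof (intro ballI impI)
    fix P R assume P: "P \<in> carrier_mat n nc" and R: "R \<in> carrier_mat n nc"
      and iv: "invertible_mat (mat_adjoint R * A * P)"
    show "mnormN Nm (E_TG A M \<nu>1 \<nu>2 Psh Rsh) \<le> mnormN Nm (E_TG A M \<nu>1 \<nu>2 P R)"
      unfolding eq by (rule LB[OF P R iv])
  qed
  show ?thesis unfolding Let_def using inv opt eq by blast
qed

end
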